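(* Let $s\in\mathscr S_+$ and let $\operatorname{supp}(s)=X_0\amalg X_1\amalg\cdots\amalg X_k$ be its interval decomposition, with $l_i:=\#X_i$ for $i\in[0,k]$. Then $$\mathfrak d(s)=l_0+2\left\lceil \tfrac{l_1}{2}\right\rceil+\cdots+2\left\lceil \tfrac{l_k}{2}\right\rceil .$$
   Context: $\omega$ denotes the natural numbers including $0$; $[n,m]=\{x\in\omega:n\le x\le m\}$, $[m]=[1,m]$. A finite sign sequence is $s=(s_i)_{i\in\omega}\in\{-,0,+\}^\omega$ with only finitely many nonzero entries; $\mathscr S$ is the set of all of them; $\operatorname{supp}(s)=\{i:s_i\ne0\}$; $\mathscr S_+=\mathscr S\cap\{0,+\}^\omega$. $\mathrm{SC}(t)$ is the number of pairs $i<j$ with $\{t_i,t_j\}=\{-,+\}$ and $t_k=0$ for all $i<k<j$. For $s\in\mathscr S_+$, $\mathfrak d(s)=\max\{\mathrm{SC}(t): t\in\mathscr S,\ t_i\in\{-,0,s_i\}\ \forall i\}$. The interval decomposition of $s\in\mathscr S_+$ is the unique decomposition $\operatorname{supp}(s)=X_0\amalg\cdots\amalg X_k$ such that each $X_i$ is an interval of $\omega$; $0\in X_0$ if $0\in\operatorname{supp}(s)$ and $X_0=\emptyset$ otherwise; $X_i\neq\emptyset$ for $i\in[k]$; and $\min X_i-\max X_{i-1}\ge 2$ for $i\in[k]$ (with $\max\emptyset=-\infty$). *)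

theory Defs
  imports Complex_Main
begin

datatype sign = Neg | Zer | Pos

definition supp :: "(nat \<Rightarrow> sign) \<Rightarrow> nat set" where
  "supp s = {i. s i \<noteq> Zer}"

definition finseqs :: "(nat \<Rightarrow> sign) set" where
  "finseqs = {s. finite (supp s)}"

definition finseqs_plus :: "(nat \<Rightarrow> sign) set" where
  "finseqs_plus = {s \<in> finseqs. \<forall>i. s i \<in> {Zer, Pos}}"

definition SC :: "(nat \<Rightarrow> sign) \<Rightarrow> nat" where
  "SC t = card {(i, j). i < j \<and> {t i, t j} = {Neg, Pos} \<and> (\<forall>k. i < k \<and> k < j \<longrightarrow> t k = Zer)}"

definition dmax :: "(nat \<Rightarrow> sign) \<Rightarrow> nat" where
  "dmax s = Max {SC t | t. t \<in> finseqs \<and> (\<forall>i. t i \<in> {Neg, Zer, s i})}"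

definition is_interval :: "nat set \<Rightarrow> bool" where
  "is_interval X \<longleftrightarrow> (\<forall>a b c. a \<in> X \<and> c \<in> X \<and> a \<le> b \<and> b \<le> c \<longrightarrow> b \<in> X)"

definition interval_decomp :: "(nat \<Rightarrow> sign) \<Rightarrow> nat \<Rightarrow> (nat \<Rightarrow> nat set) \<Rightarrow> bool" where
  "interval_decomp s k X \<longleftrightarrow>
     supp s = (\<Union>i\<in>{0..k}. X i) \<and>
     (\<forall>i\<in>{0..k}. \<forall>j\<in>{0..k}. i \<noteq> j \<longrightarrow> X i \<inter> X j = {}) \<and>
     (\<forall>i\<in>{0..k}. is_interval (X i)) \<and>
     (0 \<in> supp s \<longrightarrow> 0 \<in> X 0) \<and> (0 \<notin> supp s \<longrightarrow> X 0 = {}) \<and>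
     (\<forall>i\<in>{1..k}. X i \<noteq> {}) \<and>
     (\<forall>i\<in>{1..k}. X (i - 1) \<noteq> {} \<longrightarrow> Min (X i) \<ge> Max (X (i - 1)) + 2)"

end

theory Submission
  imports Defs
begin


definition chg :: "(nat \<Rightarrow> sign) \<Rightarrow> (nat \<times> nat) set" where
  "chg t = {(i, j). i < j \<and> {t i, t j} = {Neg, Pos} \<and> (\<forall>k. i < k \<and> k < j \<longrightarrow> t k = Zer)}"

definition Aset :: "(nat \<Rightarrow> sign) \<Rightarrow> nat set" where
  "Aset t = snd ` {c \<in> chg t. t (snd c) = Pos}"
definition Bset :: "(nat \<Rightarrow> sign) \<Rightarrow> nat set" where
  "Bset t = fst ` {c \<in> chg t. t (fst c) = Pos}"

definition nocons :: "nat set \<Rightarrow> bool" where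
  "nocons Y \<longleftrightarrow> (\<forall>p\<in>Y. Suc p \<notin> Y)"

lemma SC_chg: "SC t = card (chg t)" unfolding SC_def chg_def by simp

lemma chg_inj_snd: "(i,j) \<in> chg t \<Longrightarrow> (i',j) \<in> chg t \<Longrightarrow> i = i'"
  unfolding chg_def
  by (clarsimp, metis linorder_neqE_nat sign.distinct insert_commute doubleton_eq_iff)

lemma chg_inj_fst: "(i,j) \<in> chg t \<Longrightarrow> (i,j') \<in> chg t \<Longrightarrow> j = j'"
  unfolding chg_def
  by (clarsimp, metis linorder_neqE_nat sign.distinct insert_commute doubleton_eq_iff)

lemma chg_fin: "finite (supp t) \<Longrightarrow> finite (chg t)"
proof -
  assume f: "finite (supp t)"
  have "chg t \<subseteq> supp t \<times> supp t" unfolding chg_def supp_def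
    by (auto simp: doubleton_eq_iff)
  then show ?thesis using f finite_subset by blast
qed

lemma SC_eq: assumes "finite (supp t)" shows "SC t = card (Aset t) + card (Bset t)"
proof -
  let ?P = "{c \<in> chg t. t (snd c) = Pos}" and ?Q = "{c \<in> chg t. t (fst c) = Pos}"
  have un: "chg t = ?P \<union> ?Q" unfolding chg_def by (auto simp: doubleton_eq_iff)
  have dj: "?P \<inter> ?Q = {}" unfolding chg_def by (auto simp: doubleton_eq_iff)
  have f: "finite (chg t)" using chg_fin assms by blast
  have "card (chg t) = card ?P + card ?Q" using un dj f
    by (metis (no_types, lifting) card_Un_disjoint finite_Un)
  moreover have "inj_on snd ?P" by (rule inj_onI) (auto intro: chg_inj_snd)
  moreover have "inj_on fst ?Q" by (rule inj_onI) (auto intro: chg_inj_fst)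
  ultimately show ?thesis unfolding SC_chg Aset_def Bset_def by (simp add: card_image)
qed

lemma Aset_props: "p \<in> Aset t \<Longrightarrow> t p = Pos \<and> p \<noteq> 0"
  unfolding Aset_def chg_def by auto

lemma Bset_props: "p \<in> Bset t \<Longrightarrow> t p = Pos"
  unfolding Bset_def chg_def by auto

lemma Aset_nocons: "nocons (Aset t)"
  unfolding nocons_def
proof
  fix p assume p: "p \<in> Aset t"
  show "Suc p \<notin> Aset t"
  proof
    assume "Suc p \<in> Aset t"
    then obtain i where c: "(i, Suc p) \<in> chg t" "t (Suc p) = Pos" unfolding Aset_def by auto
    have tp: "t p = Pos" using p Aset_props by blast
    from c have "i < Suc p" "t i = Neg" "\<forall>k. i < k \<and> k < Suc p \<longrightarrow> t k = Zer"
      unfolding chg_def by (auto simp: doubleton_eq_iff)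
    then show False using tp by (metis less_Suc_eq sign.distinct(3) sign.distinct(5))
  qed
qed

lemma Bset_nocons: "nocons (Bset t)"
  unfolding nocons_def
proof
  fix p assume p: "p \<in> Bset t"
  show "Suc p \<notin> Bset t"
  proof
    assume "Suc p \<in> Bset t"
    then have tp1: "t (Suc p) = Pos" using Bset_props by blast
    from p obtain j where c: "(p, j) \<in> chg t" "t p = Pos" unfolding Bset_def by auto
    from c have "p < j" "t j = Neg" "\<forall>k. p < k \<and> k < j \<longrightarrow> t k = Zer"
      unfolding chg_def by (auto simp: doubleton_eq_iff)
    then show False using tp1
      by (metis Suc_lessI lessI sign.distinct(3) sign.distinct(5))
  qed
qed



lemma interval_eq: assumes "finite X" "X \<noteq> {}" "is_interval X"
  shows "X = {Min X..Max X}"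
proof
  show "X \<subseteq> {Min X..Max X}" using assms by auto
  show "{Min X..Max X} \<subseteq> X"
  proof
    fix b assume "b \<in> {Min X..Max X}"
    moreover have "Min X \<in> X" "Max X \<in> X" using assms by auto
    ultimately show "b \<in> X" using assms(3) unfolding is_interval_def by (meson atLeastAtMost_iff)
  qed
qed

lemma U_lemma: assumes "finite X" "is_interval X" "Y \<subseteq> X" "nocons Y"
  shows "2 * card Y \<le> card X + 1"
proof (cases "X = {}")
  case True then show ?thesis using assms by auto
next
  case False
  define a where "a = Min X"
  define b where "b = Max X"
  have X: "X = {a..b}" using interval_eq assms False a_def b_def by blast
  have ab: "a \<le> b" using False assms(1) a_def b_def by simp
  have inj: "inj_on (\<lambda>y. (y - a) div 2) Y"
  proof (rule inj_onI)
    fix x y assume xy: "x \<in> Y" "y \<in> Y" "(x - a) div 2 = (y - a) div 2"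
    have "a \<le> x" "a \<le> y" using xy assms(3) X by auto
    show "x = y"
    proof (rule ccontr)
      assume "x \<noteq> y"
      then have "y = Suc x \<or> x = Suc y" using xy \<open>a \<le> x\<close> \<open>a \<le> y\<close> by linarith
      then show False using xy assms(4) unfolding nocons_def by blast
    qed
  qed
  have img: "(\<lambda>y. (y - a) div 2) ` Y \<subseteq> {0..(b - a) div 2}"
    proof
    fix z assume "z \<in> (\<lambda>y. (y - a) div 2) ` Y"
    then obtain y where "y \<in> Y" "z = (y - a) div 2" by blast
    moreover have "y \<le> b" using \<open>y \<in> Y\<close> assms(3) X by auto
    ultimately show "z \<in> {0..(b - a) div 2}" by (simp add: div_le_mono)
  qed
  have "card Y \<le> card {0..(b - a) div 2}"
    using card_inj_on_le[OF inj img] by simp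
  then have "card Y \<le> (b - a) div 2 + 1" by simp
  moreover have "card X = b - a + 1" using X ab by simp
  ultimately show ?thesis by linarith
qed

lemma Lo_lemma: assumes "finite I" "\<forall>p\<in>I. t p \<noteq> Pos \<longrightarrow> Suc p \<in> I \<and> t (Suc p) = Pos"
  shows "card I \<le> 2 * card {p\<in>I. t p = Pos}"
proof -
  let ?P = "{p\<in>I. t p = Pos}" and ?M = "{p\<in>I. t p \<noteq> Pos}"
  have "I = ?P \<union> ?M" by auto
  then have c: "card I = card ?P + card ?M" using assms(1)
    by (metis (no_types, lifting) card_Un_disjoint disjoint_iff finite_Un mem_Collect_eq)
  have "card ?M \<le> card ?P"
    by (rule card_inj_on_le[of Suc]) (use assms in auto)
  then show ?thesis using c by simp
qed

lemma ceil_half: "\<lceil>real l / 2\<rceil> = int ((l + 1) div 2)"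
proof (cases "even l")
  case True
  then obtain q where "l = 2 * q" by blast
  then show ?thesis by simp
next
  case False
  then obtain q where q: "l = 2 * q + 1" using oddE by blast
  have "real l / 2 = real q + 1/2" using q by simp
  then have "\<lceil>real l / 2\<rceil> = int q + 1"
    by (simp add: ceiling_eq_iff)
  then show ?thesis using q by simp
qed

context
  fixes s k X
  assumes fin: "finite (supp s)" and dec: "interval_decomp s k X"
begin

lemma X_sub: "i \<le> k \<Longrightarrow> X i \<subseteq> supp s"
  using dec unfolding interval_decomp_def by auto

lemma X_fin: "i \<le> k \<Longrightarrow> finite (X i)"
  using X_sub fin finite_subset by blast

lemma X_ne: "1 \<le> i \<Longrightarrow> i \<le> k \<Longrightarrow> X i \<noteq> {}"
  using dec unfolding interval_decomp_def by auto

lemma X_step: "1 \<le> i \<Longrightarrow> i \<le> k \<Longrightarrow> X (i - 1) \<noteq> {} \<Longrightarrow> Min (X i) \<ge> Max (X (i - 1)) + 2"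
  using dec unfolding interval_decomp_def by auto

lemma order_aux: "i + Suc d \<le> k \<Longrightarrow> X i \<noteq> {} \<Longrightarrow> x \<in> X i \<Longrightarrow> y \<in> X (i + Suc d) \<Longrightarrow> x + 2 \<le> y"
proof (induction d arbitrary: y)
  case 0
  have "x \<le> Max (X i)" using 0 X_fin by auto
  moreover have "Min (X (i+1)) \<le> y" using 0 X_fin by auto
  moreover have "Min (X (i+1)) \<ge> Max (X i) + 2" using X_step[of "i+1"] 0 by simp
  ultimately show ?case by simp
next
  case (Suc d)
  have ne: "X (i + Suc d) \<noteq> {}" using X_ne Suc.prems by simp
  then obtain z where z: "z \<in> X (i + Suc d)" by blast
  have "x + 2 \<le> z" using Suc.IH[OF _ Suc.prems(2,3) z] Suc.prems(1) by simp
  moreover have "z \<le> Max (X (i + Suc d))" using z X_fin Suc.prems(1) by simp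
  moreover have "Min (X (i + Suc (Suc d))) \<le> y" using Suc.prems X_fin by simp
  moreover have "Min (X (i + Suc (Suc d))) \<ge> Max (X (i + Suc d)) + 2"
    using X_step[of "i + Suc (Suc d)"] Suc.prems ne by simp
  ultimately show ?case by simp
qed

lemma order_lem: "i < j \<Longrightarrow> j \<le> k \<Longrightarrow> x \<in> X i \<Longrightarrow> y \<in> X j \<Longrightarrow> x + 2 \<le> y"
  using order_aux[of i "j - i - 1" x y] by (simp, metis Suc_diff_Suc add_diff_inverse_nat diff_Suc_1 less_imp_le_nat not_less_iff_gr_or_eq empty_iff)

lemma neighbor: assumes "i \<le> k" "p \<in> X i" "Suc p \<in> supp s" shows "Suc p \<in> X i"
proof -
  obtain j where j: "j \<le> k" "Suc p \<in> X j" using dec assms(3) unfolding interval_decomp_def by auto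
  show ?thesis
  proof (cases "j = i")
    case True then show ?thesis using j by simp
  next
    case False
    then have "i < j \<or> j < i" by auto
    then show ?thesis
      using order_lem[of i j p "Suc p"] order_lem[of j i "Suc p" p] assms j by auto
  qed
qed

lemma card_split: assumes "Y \<subseteq> supp s" shows "card Y = (\<Sum>m\<in>{0..k}. card (Y \<inter> X m))"
proof -
  have "Y = (\<Union>m\<in>{0..k}. Y \<inter> X m)" using assms dec unfolding interval_decomp_def by auto
  moreover have "card (\<Union>m\<in>{0..k}. Y \<inter> X m) = (\<Sum>m\<in>{0..k}. card (Y \<inter> X m))"
  proof (rule card_UN_disjoint)
    show "finite {0..k}" by simp
    show "\<forall>i\<in>{0..k}. finite (Y \<inter> X i)" using X_fin by auto
    show "\<forall>i\<in>{0..k}. \<forall>j\<in>{0..k}. i \<noteq> j \<longrightarrow> (Y \<inter> X i) \<inter> (Y \<inter> X j) = {}"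
      using dec unfolding interval_decomp_def by blast
  qed
  ultimately show ?thesis by simp
qed

end


definition Fv :: "nat \<Rightarrow> (nat \<Rightarrow> nat set) \<Rightarrow> nat" where
  "Fv k X = card (X 0) + (\<Sum>i\<in>{1..k}. 2 * ((card (X i) + 1) div 2))"

lemma nocons_Int: "nocons Y \<Longrightarrow> nocons (Y \<inter> Z)"
  unfolding nocons_def by blast

lemma Pos_supp: assumes "\<forall>i. t i \<in> {Neg, Zer, s i}" "t p = Pos" shows "p \<in> supp s"
proof -
  have "t p \<in> {Neg, Zer, s p}" using assms(1) by blast
  then have "s p = Pos" using assms(2) by auto
  then show ?thesis by (simp add: supp_def)
qed

lemma arith1: "2 * a \<le> l + 1 \<Longrightarrow> 2 * b \<le> l + 1 \<Longrightarrow> a + b \<le> 2 * ((l + 1) div (2::nat))"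
  by presburger

lemma arith2: "2 * a \<le> l \<Longrightarrow> 2 * b \<le> l + 1 \<Longrightarrow> a + b \<le> (l::nat)"
  by presburger

lemma interval_minus0: assumes "is_interval Y" shows "is_interval (Y - {0})"
  unfolding is_interval_def
proof (intro allI impI)
  fix a b c :: nat assume h: "a \<in> Y - {0} \<and> c \<in> Y - {0} \<and> a \<le> b \<and> b \<le> c"
  then have "b \<in> Y" using assms unfolding is_interval_def by blast
  moreover have "b \<noteq> 0" using h by auto
  ultimately show "b \<in> Y - {0}" by simp
qed

context
  fixes s k X
  assumes fin: "finite (supp s)" and dec: "interval_decomp s k X"
begin

lemma X0_facts: "X 0 = {} \<or> 0 \<in> X 0"
proof -
  have "0 \<in> supp s \<longrightarrow> 0 \<in> X 0" "0 \<notin> supp s \<longrightarrow> X 0 = {}"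
    using dec unfolding interval_decomp_def by simp_all
  then show ?thesis by blast
qed

lemma zero_notin: assumes "1 \<le> m" "m \<le> k" shows "0 \<notin> X m"
proof
  assume z: "0 \<in> X m"
  then have "0 \<in> supp s" using X_sub[OF fin dec assms(2)] by blast
  then have "0 \<in> X 0" using dec unfolding interval_decomp_def by simp
  moreover have "X 0 \<inter> X m = {}" using dec assms unfolding interval_decomp_def by simp
  ultimately show False using z by blast
qed

lemma Xint: "m \<le> k \<Longrightarrow> is_interval (X m)"
  using dec unfolding interval_decomp_def by simp

lemma upper:
  assumes tfin: "finite (supp t)" and tr: "\<forall>i. t i \<in> {Neg, Zer, s i}"
  shows "SC t \<le> Fv k X"
proof -
  let ?A = "Aset t" and ?B = "Bset t"
  have AS: "?A \<subseteq> supp s" using Aset_props Pos_supp[OF tr] by blast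
  have BS: "?B \<subseteq> supp s" using Bset_props Pos_supp[OF tr] by blast
  have blk: "card (?A \<inter> X m) + card (?B \<inter> X m) \<le> 2 * ((card (X m) + 1) div 2)"
    if m: "1 \<le> m" "m \<le> k" for m
  proof -
    have "2 * card (?A \<inter> X m) \<le> card (X m) + 1"
      using U_lemma[OF X_fin[OF fin dec] Xint _ nocons_Int[OF Aset_nocons]] m by simp
    moreover have "2 * card (?B \<inter> X m) \<le> card (X m) + 1"
      using U_lemma[OF X_fin[OF fin dec] Xint _ nocons_Int[OF Bset_nocons]] m by simp
    ultimately show ?thesis by (rule arith1)
  qed
  have blk0: "card (?A \<inter> X 0) + card (?B \<inter> X 0) \<le> card (X 0)"
  proof (cases "X 0 = {}")
    case True then show ?thesis by simp
  next
    case False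
    then have z: "0 \<in> X 0" using X0_facts by blast
    have f0: "finite (X 0)" using X_fin[OF fin dec] by simp
    have "2 * card (?A \<inter> X 0) \<le> card (X 0 - {0}) + 1"
    proof -
      have "?A \<inter> X 0 = ?A \<inter> (X 0 - {0})" using Aset_props by blast
      moreover have "2 * card (?A \<inter> (X 0 - {0})) \<le> card (X 0 - {0}) + 1"
        by (rule U_lemma) (simp_all add: f0 interval_minus0[OF Xint[of 0]] nocons_Int[OF Aset_nocons])
      ultimately show ?thesis by simp
    qed
    moreover have "card (X 0 - {0}) = card (X 0) - 1" using z f0 by simp
    moreover have "2 * card (?B \<inter> X 0) \<le> card (X 0) + 1"
      using U_lemma[OF f0 Xint[of 0] _ nocons_Int[OF Bset_nocons]] by simp
    moreover have "card (X 0) \<ge> 1" using False f0 by (simp add: Suc_le_eq card_gt_0_iff)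
    ultimately show ?thesis using arith2[of "card (?A \<inter> X 0)" "card (X 0)"] by linarith
  qed
  have "SC t = card ?A + card ?B" using SC_eq tfin by blast
  also have "\<dots> = (\<Sum>m\<in>{0..k}. card (?A \<inter> X m) + card (?B \<inter> X m))"
    using card_split[OF fin dec AS] card_split[OF fin dec BS] by (simp add: sum.distrib)
  also have "\<dots> = (card (?A \<inter> X 0) + card (?B \<inter> X 0)) + (\<Sum>m\<in>{1..k}. card (?A \<inter> X m) + card (?B \<inter> X m))"
    using sum.atLeast_Suc_atMost[of 0 k "\<lambda>m. card (?A \<inter> X m) + card (?B \<inter> X m)"] by simp
  also have "\<dots> \<le> Fv k X"
    unfolding Fv_def by (intro add_mono blk0 sum_mono blk) auto
  finally show ?thesis .
qed

end


definition rho :: "nat set \<Rightarrow> nat \<Rightarrow> nat" where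
  "rho S p = (LEAST d. p + d \<notin> S)"

definition t0 :: "nat set \<Rightarrow> nat \<Rightarrow> sign" where
  "t0 S p = (if p \<in> S then (if odd (rho S p) then Pos else Neg) else if p \<le> Max S + 1 then Neg else Zer)"

lemma rho_out: "p \<notin> S \<Longrightarrow> rho S p = 0"
  unfolding rho_def by (rule Least_eq_0) simp

lemma rho_in: assumes "finite S" "p \<in> S" shows "rho S p = Suc (rho S (Suc p))"
proof -
  obtain n where n: "\<forall>x\<in>S. x < n" using finite_nat_set_iff_bounded assms(1) by blast
  have "p + n \<notin> S" using n by fastforce
  then have "(LEAST d. p + d \<notin> S) = Suc (LEAST m. p + Suc m \<notin> S)"
    by (rule Least_Suc) (simp add: assms(2))
  then show ?thesis unfolding rho_def by simp
qed

lemma t0_Pos_in: "t0 S p = Pos \<Longrightarrow> p \<in> S"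
  unfolding t0_def by (auto split: if_splits)

lemma t0_L1: assumes "finite S" "p \<in> S" "t0 S p \<noteq> Pos" shows "Suc p \<in> S \<and> t0 S (Suc p) = Pos"
proof -
  have e: "even (rho S p)" using assms(2,3) unfolding t0_def by (cases "odd (rho S p)") simp_all
  have o: "odd (rho S (Suc p))" using e rho_in[OF assms(1,2)] by simp
  then have "rho S (Suc p) \<noteq> 0" by (intro notI) simp
  then have "Suc p \<in> S" using rho_out[of "Suc p" S] by auto
  then show ?thesis using o unfolding t0_def by simp
qed

lemma t0_L2: assumes "finite S" "p \<in> S" "Suc p \<in> S" "t0 S p = Pos" shows "t0 S (Suc p) = Neg"
proof -
  have o: "odd (rho S p)" using assms(2,4) unfolding t0_def by (cases "odd (rho S p)") simp_all
  have e: "even (rho S (Suc p))" using o rho_in[OF assms(1,2)] by simp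
  then show ?thesis using assms(3) unfolding t0_def by simp
qed

lemma t0_gap: "p \<notin> S \<Longrightarrow> p \<le> Max S + 1 \<Longrightarrow> t0 S p = Neg"
  unfolding t0_def by simp

lemma t0_fin: assumes "finite S" shows "finite (supp (t0 S))"
proof -
  have "supp (t0 S) \<subseteq> S \<union> {..Max S + 1}" unfolding supp_def t0_def by auto
  moreover have "finite (S \<union> {..Max S + 1})" using assms by simp
  ultimately show ?thesis using finite_subset by blast
qed

lemma t0_nz: "p \<in> S \<Longrightarrow> t0 S p = Pos \<or> t0 S p = Neg"
  unfolding t0_def by auto

lemma chg_Suc: "{t i, t (Suc i)} = {Neg, Pos} \<Longrightarrow> (i, Suc i) \<in> chg t"
  unfolding chg_def by (simp add: less_Suc_eq) arith

lemma t0_inB: assumes "finite S" "t0 S p = Pos" shows "p \<in> Bset (t0 S)"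
proof -
  have pS: "p \<in> S" using t0_Pos_in assms(2) by blast
  have "t0 S (Suc p) = Neg"
  proof (cases "Suc p \<in> S")
    case True then show ?thesis using t0_L2 assms pS by blast
  next
    case False
    have "p \<le> Max S" using pS assms(1) by simp
    then show ?thesis using t0_gap False by simp
  qed
  then have "(p, Suc p) \<in> chg (t0 S)" using assms(2) by (intro chg_Suc) auto
  then have "(p, Suc p) \<in> {c \<in> chg (t0 S). t0 S (fst c) = Pos}" using assms(2) by simp
  then show ?thesis unfolding Bset_def by (rule image_eqI[rotated]) simp
qed

lemma t0_inA: assumes "finite S" "t0 S p = Pos" "p \<noteq> 0" shows "p \<in> Aset (t0 S)"
proof -
  obtain q where q: "p = Suc q" using assms(3) not0_implies_Suc by blast
  have pS: "p \<in> S" using t0_Pos_in assms(2) by blast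
  have "t0 S q = Neg"
  proof (cases "q \<in> S")
    case True
    show ?thesis
    proof (rule ccontr)
      assume "t0 S q \<noteq> Neg"
      then have "t0 S q = Pos" using t0_nz True by blast
      then have "t0 S p = Neg" using t0_L2[OF assms(1) True] pS q by simp
      then show False using assms(2) by simp
    qed
  next
    case False
    have "p \<le> Max S" using pS assms(1) by simp
    then show ?thesis using t0_gap False q by simp
  qed
  then have "(q, p) \<in> chg (t0 S)" using assms(2) q by (intro chg_Suc[of _ q, simplified q[symmetric]]) auto
  then have "(q, p) \<in> {c \<in> chg (t0 S). t0 S (snd c) = Pos}" using assms(2) by simp
  then show ?thesis unfolding Aset_def by (rule image_eqI[rotated]) simp
qed

lemma arith3: "l \<le> 2 * a \<Longrightarrow> l \<le> 2 * b \<Longrightarrow> 2 * ((l + 1) div 2) \<le> a + (b::nat)"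
proof (cases "even l")
  case True
  then obtain q where "l = 2 * q" by blast
  moreover assume "l \<le> 2 * a" "l \<le> 2 * b"
  ultimately show ?thesis by simp
next
  case False
  then obtain q where q: "l = 2 * q + 1" using oddE by blast
  assume "l \<le> 2 * a" "l \<le> 2 * b"
  then have "q + 1 \<le> a" "q + 1 \<le> b" using q by presburger+
  then show ?thesis using q by simp
qed
lemma arith4: "l - 1 \<le> 2 * a \<Longrightarrow> l \<le> 2 * b \<Longrightarrow> l \<le> a + (b::nat)"
  by presburger

context
  fixes s k X
  assumes fin: "finite (supp s)" and dec: "interval_decomp s k X"
begin

abbreviation "tt \<equiv> t0 (supp s)"

lemma closed: assumes "m \<le> k" "p \<in> X m" "tt p \<noteq> Pos" shows "Suc p \<in> X m \<and> tt (Suc p) = Pos"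
proof -
  have "p \<in> supp s" using X_sub[OF fin dec assms(1)] assms(2) by blast
  then have "Suc p \<in> supp s \<and> tt (Suc p) = Pos" using t0_L1 fin assms(3) by blast
  then show ?thesis using neighbor[OF fin dec assms(1,2)] by blast
qed

lemma lower: "Fv k X \<le> SC tt"
proof -
  let ?A = "Aset tt" and ?B = "Bset tt"
  have AS: "?A \<subseteq> supp s" using Aset_props t0_Pos_in by blast
  have BS: "?B \<subseteq> supp s" using Bset_props t0_Pos_in by blast
  have fA: "finite ?A" using AS fin finite_subset by blast
  have fB: "finite ?B" using BS fin finite_subset by blast
  have blk: "2 * ((card (X m) + 1) div 2) \<le> card (?A \<inter> X m) + card (?B \<inter> X m)"
    if m: "1 \<le> m" "m \<le> k" for m
  proof -
    have fX: "finite (X m)" using X_fin[OF fin dec m(2)] .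
    have c: "card (X m) \<le> 2 * card {p\<in>X m. tt p = Pos}"
      by (rule Lo_lemma) (use fX closed m in auto)
    have "{p\<in>X m. tt p = Pos} \<subseteq> ?A \<inter> X m"
      using t0_inA[OF fin] zero_notin[OF fin dec m] by auto
    then have "card {p\<in>X m. tt p = Pos} \<le> card (?A \<inter> X m)" using fA by (intro card_mono) auto
    moreover have "{p\<in>X m. tt p = Pos} \<subseteq> ?B \<inter> X m"
      using t0_inB[OF fin] by auto
    then have "card {p\<in>X m. tt p = Pos} \<le> card (?B \<inter> X m)" using fB by (intro card_mono) auto
    ultimately show ?thesis using c arith3 by (meson le_trans mult_le_mono2)
  qed
  have blk0: "card (X 0) \<le> card (?A \<inter> X 0) + card (?B \<inter> X 0)"
  proof -
    have f0: "finite (X 0)" using X_fin[OF fin dec] by simp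
    have c1: "card (X 0 - {0}) \<le> 2 * card {p\<in>X 0 - {0}. tt p = Pos}"
      by (rule Lo_lemma) (use f0 closed[of 0] in auto)
    have "{p\<in>X 0 - {0}. tt p = Pos} \<subseteq> ?A \<inter> X 0"
      using t0_inA[OF fin] by auto
    then have a1: "card {p\<in>X 0 - {0}. tt p = Pos} \<le> card (?A \<inter> X 0)" using fA by (intro card_mono) auto
    have c2: "card (X 0) \<le> 2 * card {p\<in>X 0. tt p = Pos}"
      by (rule Lo_lemma) (use f0 closed[of 0] in auto)
    have "{p\<in>X 0. tt p = Pos} \<subseteq> ?B \<inter> X 0"
      using t0_inB[OF fin] by auto
    then have b1: "card {p\<in>X 0. tt p = Pos} \<le> card (?B \<inter> X 0)" using fB by (intro card_mono) auto
    have "card (X 0) - 1 \<le> card (X 0 - {0})" by (simp add: card_Diff_singleton_if f0)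
    then show ?thesis using c1 a1 c2 b1 arith4[of "card (X 0)" "card (?A \<inter> X 0)" "card (?B \<inter> X 0)"]
      by linarith
  qed
  have "Fv k X \<le> (card (?A \<inter> X 0) + card (?B \<inter> X 0)) + (\<Sum>m\<in>{1..k}. card (?A \<inter> X m) + card (?B \<inter> X m))"
    unfolding Fv_def by (intro add_mono blk0 sum_mono blk) auto
  also have "\<dots> = (\<Sum>m\<in>{0..k}. card (?A \<inter> X m) + card (?B \<inter> X m))"
    using sum.atLeast_Suc_atMost[of 0 k "\<lambda>m. card (?A \<inter> X m) + card (?B \<inter> X m)"] by simp
  also have "\<dots> = card ?A + card ?B"
    using card_split[OF fin dec AS] card_split[OF fin dec BS] by (simp add: sum.distrib)
  also have "\<dots> = SC tt" using SC_eq t0_fin[OF fin] by metis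
  finally show ?thesis .
qed

end

theorem mainTheorem2:
  fixes s :: "nat \<Rightarrow> sign" and k :: nat and X :: "nat \<Rightarrow> nat set"
  assumes "s \<in> finseqs_plus"
    and "interval_decomp s k X"
  shows "int (dmax s) = int (card (X 0)) + (\<Sum>i\<in>{1..k}. 2 * \<lceil>real (card (X i)) / 2\<rceil>)"
proof -
  have fin: "finite (supp s)" and sp: "\<forall>i. s i \<in> {Zer, Pos}"
    using assms(1) unfolding finseqs_plus_def finseqs_def by auto
  note dec = assms(2)
  let ?T = "{SC t | t. t \<in> finseqs \<and> (\<forall>i. t i \<in> {Neg, Zer, s i})}"
  have ub: "y \<le> Fv k X" if "y \<in> ?T" for y
    using that upper[OF fin dec] unfolding finseqs_def by auto
  have tt_ok: "t0 (supp s) \<in> finseqs \<and> (\<forall>i. t0 (supp s) i \<in> {Neg, Zer, s i})"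
  proof
    show "t0 (supp s) \<in> finseqs" using t0_fin[OF fin] unfolding finseqs_def by blast
    show "\<forall>i. t0 (supp s) i \<in> {Neg, Zer, s i}"
    proof
      fix i
      show "t0 (supp s) i \<in> {Neg, Zer, s i}"
      proof (cases "i \<in> supp s")
        case True
        then have "s i = Pos" using sp unfolding supp_def by auto
        then show ?thesis unfolding t0_def by auto
      next
        case False then show ?thesis unfolding t0_def by auto
      qed
    qed
  qed
  have eq: "SC (t0 (supp s)) = Fv k X"
    using lower[OF fin dec] upper[OF fin dec t0_fin[OF fin]] tt_ok by (simp add: le_antisym)
  have inT: "Fv k X \<in> ?T" using tt_ok eq[symmetric] by blast
  have finT: "finite ?T" by (rule finite_subset[of _ "{..Fv k X}"]) (use ub in auto)
  have "dmax s = Fv k X" unfolding dmax_def by (rule Max_eqI[OF finT ub inT])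
  then show ?thesis unfolding Fv_def by (simp add: ceil_half of_nat_sum)
qed


end
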